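(* For all $x>0$ and $0\le p\le 1$, $$W_p(x,1)\le K(x)^{p(1-p)}\,L(x,1).$$ Equivalently, for all $x,y>0$ and $0\le p\le 1$: $W_p(x,y)\le K(x/y)^{p(1-p)}L(x,y)$.
   Context: $K(x)=\frac{(x+1)^2}{4x}$ (Kantorovich constant) for $x>0$. $L(x,y)=\frac{x-y}{\log x-\log y}$ for $x\ne y$, $L(x,x)=x$. The Wigner--Yanase--Dyson function is $W_p(x,y)=\frac{p(1-p)(x-y)^2}{(x^p-y^p)(x^{1-p}-y^{1-p})}$ for $x\neq y$, $p\notin\{0,1\}$, with $W_p(x,x)=x$, and $W_0=W_1=L$ (limiting values). *)

theory Defs
  imports Complex_Main
begin

definition kant :: "real \<Rightarrow> real" where
  "kant x = (x + 1)^2 / (4 * x)"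

definition logmean :: "real \<Rightarrow> real \<Rightarrow> real" where
  "logmean x y = (if x = y then x else (x - y) / (ln x - ln y))"

definition wyd :: "real \<Rightarrow> real \<Rightarrow> real \<Rightarrow> real" where
  "wyd p x y =
     (if p = 0 \<or> p = 1 then logmean x y
      else if x = y then x
      else p * (1 - p) * (x - y)^2 / ((x powr p - y powr p) * (x powr (1 - p) - y powr (1 - p))))"

end

theory Submission
  imports Defs
begin

lemma sinh_ge_x: fixes t :: real assumes "0 \<le> t" shows "t \<le> sinh t"
  using real_le_x_sinh[OF assms] by (simp add: sinh_field_def exp_minus)

lemma sc_ge: fixes t :: real assumes "0 \<le> t" shows "t \<le> sinh t * cosh t"
proof -
  have "2*t \<le> sinh (2*t)" using sinh_ge_x assms by simp
  thus ?thesis by (simp add: sinh_double)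
qed

lemma sinh_le_tcosh: fixes t :: real assumes "0 \<le> t" shows "sinh t \<le> t * cosh t"
proof -
  have "0 * cosh 0 - sinh 0 \<le> t * cosh t - sinh t"
    by (rule DERIV_nonneg_imp_nondecreasing[OF assms])
       (auto intro!: derivative_eq_intros exI[of _ "_ * sinh _"] simp: algebra_simps)
  thus ?thesis by simp
qed

lemma h_nonneg: fixes t :: real assumes "0 \<le> t" shows "t * sinh t / cosh t \<le> 2 * ln (cosh t)"
proof -
  have "2 * ln (cosh 0) - 0 * sinh 0 / cosh 0 \<le> 2 * ln (cosh t) - t * sinh t / cosh t"
  proof (rule DERIV_nonneg_imp_nondecreasing[OF assms])
    fix x :: real assume x: "0 \<le> x" "x \<le> t"
    have d: "DERIV (\<lambda>t. 2 * ln (cosh t) - t * sinh t / cosh t) x :>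
       2 * (sinh x / cosh x) - ((sinh x + x * cosh x) * cosh x - x * sinh x * sinh x) / (cosh x)^2"
      by (auto intro!: derivative_eq_intros simp: power2_eq_square) (simp add: field_simps)
    have k: "(sinh x + x * cosh x) * cosh x - x * sinh x * sinh x = sinh x * cosh x + x"
    proof -
      have "(sinh x + x * cosh x) * cosh x - x * sinh x * sinh x = sinh x * cosh x + x * (cosh x ^ 2 - sinh x ^ 2)"
        by (simp add: algebra_simps power2_eq_square)
      thus ?thesis using cosh_square_eq[of x] by simp
    qed
    have "2 * (sinh x / cosh x) - ((sinh x + x * cosh x) * cosh x - x * sinh x * sinh x) / (cosh x)^2
        = (sinh x * cosh x - x) / (cosh x)^2"
    proof -
      have c: "cosh x \<noteq> 0" by simp
      show ?thesis unfolding k using c by (simp add: divide_simps) (simp add: algebra_simps power2_eq_square)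
    qed
    moreover have "(sinh x * cosh x - x) / (cosh x)^2 \<ge> 0" using sc_ge[OF x(1)] by simp
    ultimately show "\<exists>y. DERIV (\<lambda>t. 2 * ln (cosh t) - t * sinh t / cosh t) x :> y \<and> 0 \<le> y"
      using d by metis
  qed
  thus ?thesis by simp
qed

lemma lncosh_ratio: fixes s t :: real assumes "0 < s" "s \<le> t"
  shows "ln (cosh t) * s^2 \<le> ln (cosh s) * t^2"
proof -
  have "ln (cosh s) / s^2 \<ge> ln (cosh t) / t^2"
  proof (rule DERIV_nonpos_imp_nonincreasing[OF assms(2)])
    fix x :: real assume x: "s \<le> x" "x \<le> t"
    hence xp: "x > 0" using assms by simp
    have d: "DERIV (\<lambda>t. ln (cosh t) / t^2) x :>
       ((sinh x / cosh x) * x^2 - ln (cosh x) * (2 * x)) / (x^2)^2"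
      using xp by (auto intro!: derivative_eq_intros simp: power2_eq_square)
    have "((sinh x / cosh x) * x^2 - ln (cosh x) * (2 * x)) = x * (x * sinh x / cosh x - 2 * ln (cosh x))"
      by (simp add: algebra_simps power2_eq_square)
    moreover have "x * (x * sinh x / cosh x - 2 * ln (cosh x)) \<le> 0"
      using h_nonneg[of x] xp by (simp add: mult_nonneg_nonpos)
    ultimately have "((sinh x / cosh x) * x^2 - ln (cosh x) * (2 * x)) / (x^2)^2 \<le> 0"
      by (intro divide_nonpos_pos) (use xp in auto)
    thus "\<exists>y. DERIV (\<lambda>t. ln (cosh t) / t^2) x :> y \<and> y \<le> 0" using d by metis
  qed
  thus ?thesis using assms by (simp add: field_simps)
qed

lemma claimC: fixes p v :: real assumes "0 \<le> p" "p \<le> 1"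
  shows "p^2 * ln (cosh v) \<le> ln (cosh (p * v))"
proof -
  have e: "cosh (p * v) = cosh (p * \<bar>v\<bar>)" "cosh v = cosh \<bar>v\<bar>"
    using assms by (metis abs_mult abs_of_nonneg cosh_real_abs)+
  show ?thesis
  proof (cases "p = 0 \<or> v = 0")
    case True thus ?thesis by auto
  next
    case False
    hence "0 < p * \<bar>v\<bar>" "p * \<bar>v\<bar> \<le> \<bar>v\<bar>" using assms by (auto simp: mult_le_cancel_right1)
    from lncosh_ratio[OF this] have "ln (cosh \<bar>v\<bar>) * (p^2 * v^2) \<le> ln (cosh (p*\<bar>v\<bar>)) * v^2"
      by (simp add: power_mult_distrib)
    hence "(p^2 * ln (cosh \<bar>v\<bar>)) * v^2 \<le> ln (cosh (p*\<bar>v\<bar>)) * v^2" by (simp add: algebra_simps)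
    hence r: "p^2 * ln (cosh \<bar>v\<bar>) \<le> ln (cosh (p*\<bar>v\<bar>))" using False by simp
    show ?thesis unfolding e by (rule r)
  qed
qed

lemma main_pos:
  fixes p u :: real assumes p: "0 < p" "p < 1" and u: "0 < u"
  shows "p * (1 - p) * u * sinh u \<le> sinh (p * u) * sinh ((1 - p) * u) * cosh u powr (2 * p * (1 - p))"
proof -
  define q where "q = 1 - p"
  have q: "0 < q" "q < 1" using p by (auto simp: q_def)
  define f where "f t = ln (sinh t / t)" for t :: real
  define g where "g t = ln (cosh t)" for t :: real
  define \<Phi> where "\<Phi> t = f t - f (p*t) - f (q*t) - 2*p*q*g t" for t
  have pq: "0 \<le> p * q" using p q by simp
  have half: "f t = f (t/2) + g (t/2)" if "t > 0" for t
  proof -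
    have "sinh t = sinh (2 * (t/2))" by simp
    also have "\<dots> = 2 * sinh (t/2) * cosh (t/2)" by (rule sinh_double)
    finally have eq: "sinh t / t = (sinh (t/2) / (t/2)) * cosh (t/2)" using that by simp
    have "sinh (t/2) / (t/2) > 0" using that by simp
    hence "ln ((sinh (t/2) / (t/2)) * cosh (t/2)) = ln (sinh (t/2) / (t/2)) + ln (cosh (t/2))"
      using ln_mult[of "sinh (t/2) / (t/2)" "cosh (t/2)"] by simp
    thus ?thesis unfolding f_def g_def eq by simp
  qed
  have gnn: "g t \<ge> 0" for t unfolding g_def using cosh_real_ge_1 by simp
  have gdouble: "2 * g (t/2) \<le> g t" for t
  proof -
    have "cosh t = cosh (2 * (t/2))" by simp
    also have "\<dots> = 2 * cosh (t/2)^2 - 1" unfolding cosh_double using cosh_square_eq[of "t/2"] by simp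
    finally have "cosh (t/2)^2 \<le> cosh t" using cosh_real_ge_1[of "t/2"] by (simp add: power2_eq_square) (smt (verit) mult_left_mono cosh_real_ge_1)
    hence "ln (cosh (t/2)^2) \<le> ln (cosh t)" by simp
    thus ?thesis unfolding g_def by (simp add: ln_realpow)
  qed
  have rec: "\<Phi> t \<le> \<Phi> (t/2)" if t: "t > 0" for t
  proof -
    have h1: "f t = f (t/2) + g (t/2)" using half t by blast
    have h2: "f (p*t) = f (p*(t/2)) + g (p*(t/2))" using half[of "p*t"] t p by simp
    have h3: "f (q*t) = f (q*(t/2)) + g (q*(t/2))" using half[of "q*t"] t q by simp
    have c1: "p^2 * g (t/2) \<le> g (p*(t/2))" unfolding g_def using claimC[of p "t/2"] p by simp
    have c2: "q^2 * g (t/2) \<le> g (q*(t/2))" unfolding g_def using claimC[of q "t/2"] q by simp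
    have e: "p^2 * g (t/2) + q^2 * g (t/2) = g (t/2) - 2*p*q * g (t/2)"
      unfolding q_def by (simp add: algebra_simps power2_eq_square)
    have m: "2*p*q * (2 * g (t/2)) \<le> 2*p*q * g t" using mult_left_mono[OF gdouble, of "2*p*q"] pq by simp
    show ?thesis unfolding \<Phi>_def using h1 h2 h3 c1 c2 e m by (simp add: algebra_simps)
  qed
  have iter: "\<Phi> u \<le> \<Phi> (u / 2^n)" for n
  proof (induction n)
    case 0 then show ?case by simp
  next
    case (Suc n)
    have "\<Phi> (u/2^n) \<le> \<Phi> (u/2^n/2)" by (rule rec) (use u in simp)
    moreover have "u/2^n/2 = u / 2^Suc n" by simp
    ultimately show ?case using Suc by (metis order_trans)
  qed
  have fnn: "f t \<ge> 0" if "t > 0" for t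
  proof -
    have "1 \<le> sinh t / t" using sinh_ge_x[of t] that by simp
    thus ?thesis unfolding f_def by simp
  qed
  have bnd: "\<Phi> t \<le> g t" if t: "t > 0" for t
  proof -
    have "sinh t / t \<le> cosh t" using sinh_le_tcosh[of t] t by (simp add: divide_le_eq mult.commute)
    moreover have "sinh t / t > 0" using t by simp
    ultimately have "f t \<le> g t" unfolding f_def g_def by simp
    moreover have "f (p*t) \<ge> 0" "f (q*t) \<ge> 0" using fnn p q t by simp_all
    moreover have "2*p*q*g t \<ge> 0" using pq gnn by simp
    ultimately show ?thesis unfolding \<Phi>_def by linarith
  qed
  have lim: "(\<lambda>n. g (u / 2^n)) \<longlonglongrightarrow> g 0"
    unfolding g_def
    by (rule isCont_tendsto_compose[where g = "\<lambda>t. ln (cosh t)"]) (auto intro!: continuous_intros LIMSEQ_divide_realpow_zero)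
  have "\<Phi> u \<le> 0"
  proof (rule LIMSEQ_le_const)
    show "(\<lambda>n. g (u / 2^n)) \<longlonglongrightarrow> 0" using lim by (simp add: g_def)
    show "\<exists>N. \<forall>n\<ge>N. \<Phi> u \<le> g (u / 2^n)" using iter bnd u by (meson order_trans divide_pos_pos zero_less_power zero_less_numeral)
  qed
  hence le: "ln (sinh u / u) \<le> ln (sinh (p*u) / (p*u)) + ln (sinh (q*u) / (q*u)) + 2*p*q * ln (cosh u)"
    unfolding \<Phi>_def f_def g_def by simp
  have pos1: "sinh (p*u) / (p*u) > 0" "sinh (q*u) / (q*u) > 0" using p q u by simp_all
  have "ln (sinh (p*u) / (p*u)) + ln (sinh (q*u) / (q*u)) + 2*p*q * ln (cosh u)
      = ln (sinh (p*u) / (p*u) * (sinh (q*u) / (q*u)) * cosh u powr (2*p*q))"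
  proof -
    define A where "A = sinh (p*u) / (p*u)"
    define B where "B = sinh (q*u) / (q*u)"
    define C where "C = cosh u powr (2*p*q)"
    have AB: "A > 0" "B > 0" "C > 0" using pos1 by (simp_all add: A_def B_def C_def)
    have "ln (A*B*C) = ln (A*B) + ln C" using ln_mult[of "A*B" C] AB by simp
    also have "ln (A*B) = ln A + ln B" using ln_mult[of A B] AB by simp
    also have "ln C = 2*p*q * ln (cosh u)" unfolding C_def by (simp add: ln_powr)
    finally show ?thesis by (simp add: A_def B_def C_def)
  qed
  with le have LL: "ln (sinh u / u) \<le> ln (sinh (p*u) / (p*u) * (sinh (q*u) / (q*u)) * cosh u powr (2*p*q))"
    by simp
  hence "sinh u / u \<le> sinh (p*u) / (p*u) * (sinh (q*u) / (q*u)) * cosh u powr (2*p*q)"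
  proof -
    have P: "0 < sinh (p*u) / (p*u) * (sinh (q*u) / (q*u)) * cosh u powr (2*p*q)"
      using pos1 by (intro mult_pos_pos) auto
    have Q: "0 < sinh u / u" using u by simp
    show ?thesis using ln_le_cancel_iff[OF Q P] LL by blast
  qed
  hence "sinh u / u * (p*q*u*u) \<le> sinh (p*u) / (p*u) * (sinh (q*u) / (q*u)) * cosh u powr (2*p*q) * (p*q*u*u)"
    using pq u by (intro mult_right_mono) auto
  hence "p*q*u * sinh u \<le> sinh (p*u) * sinh (q*u) * cosh u powr (2*p*q)"
    using p q u by (simp add: field_simps)
  thus ?thesis unfolding q_def by simp
qed

lemma main_nz:
  fixes p u :: real assumes p: "0 < p" "p < 1" and u: "u \<noteq> 0"
  shows "p * (1 - p) * u * sinh u \<le> sinh (p * u) * sinh ((1 - p) * u) * cosh u powr (2 * p * (1 - p))"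
proof (cases "u > 0")
  case True then show ?thesis using main_pos p by blast
next
  case False
  hence "-u > 0" using u by simp
  from main_pos[OF p this] show ?thesis by simp
qed

lemma exp2: "exp (2 * a) = exp a * exp (a::real)"
  by (metis mult_2 exp_add)
lemma exp2_sinh: "exp (2 * a) - 1 = 2 * exp a * sinh (a::real)"
  unfolding exp2 by (simp add: sinh_field_def exp_minus field_simps)
lemma exp2_cosh: "exp (2 * a) + 1 = 2 * exp a * cosh (a::real)"
  unfolding exp2 by (simp add: cosh_field_def exp_minus field_simps)

theorem theorem2p3:
  fixes x p :: real
  assumes "x > 0" and "0 \<le> p" and "p \<le> 1"
  shows "wyd p x 1 \<le> kant x powr (p * (1 - p)) * logmean x 1"
proof -
  have kpos: "kant x > 0" using assms(1) unfolding kant_def by simp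
  consider "p = 0 \<or> p = 1" | "x = 1" "\<not> (p = 0 \<or> p = 1)" | "0 < p" "p < 1" "x \<noteq> 1"
    using assms by linarith
  then show ?thesis
  proof cases
    case 1
    then show ?thesis using kpos unfolding wyd_def by auto
  next
    case 2
    then show ?thesis unfolding wyd_def logmean_def kant_def by simp
  next
    case 3
    note p = 3(1,2)
    define q where "q = 1 - p"
    define u where "u = ln x / 2"
    have x: "x = exp (2 * u)" unfolding u_def using assms(1) by simp
    have u0: "u \<noteq> 0" using 3(3) x by auto
    have lnx: "ln x = 2 * u" unfolding x by simp
    have xp: "x powr p = exp (2 * (p * u))" using assms(1) by (simp add: powr_def lnx algebra_simps)
    have xq: "x powr q = exp (2 * (q * u))" using assms(1) by (simp add: powr_def lnx algebra_simps)
    have eu: "exp (p*u) * exp (q*u) = exp u" unfolding q_def by (simp add: mult_exp_exp algebra_simps)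
    define S where "S = sinh (p*u) * sinh (q*u)"
    have Spos: "S > 0"
    proof (cases "u > 0")
      case True thus ?thesis using p unfolding S_def q_def by simp
    next
      case False hence "u < 0" using u0 by simp
      hence "sinh (p*u) < 0" "sinh (q*u) < 0" using p unfolding q_def by (simp_all add: mult_pos_neg)
      thus ?thesis unfolding S_def by (simp add: mult_neg_neg)
    qed
    have shu: "sinh u / u > 0"
      using u0 by (cases "u > 0") (auto simp: divide_neg_neg)
    define C where "C = cosh u powr (2 * p * q)"
    have main: "p * q * u * sinh u \<le> S * C"
      using main_nz[OF p u0] unfolding S_def C_def q_def by simp
    have W: "wyd p x 1 = p * q * exp u * sinh u ^ 2 / S"
    proof -
      have "wyd p x 1 = p * q * (x - 1)^2 / ((x powr p - 1) * (x powr q - 1))"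
        using 3 unfolding wyd_def q_def by simp
      also have "\<dots> = p * q * (2 * exp u * sinh u)^2 / ((2 * exp (p*u) * sinh (p*u)) * (2 * exp (q*u) * sinh (q*u)))"
        unfolding xp xq by (simp add: x exp2_sinh)
      also have "\<dots> = p * q * (4 * exp u * exp u * sinh u ^2) / (4 * (exp (p*u) * exp (q*u)) * S)"
        unfolding S_def by (simp add: power2_eq_square algebra_simps)
      also have "\<dots> = p * q * exp u * sinh u ^ 2 / S" unfolding eu by (simp add: field_simps power2_eq_square)
      finally show ?thesis .
    qed
    have Lm: "logmean x 1 = exp u * sinh u / u"
    proof -
      have "logmean x 1 = (x - 1) / ln x" using 3 unfolding logmean_def by simp
      also have "\<dots> = exp u * sinh u / u" unfolding lnx by (simp add: x exp2_sinh)
      finally show ?thesis .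
    qed
    have K: "kant x powr (p * (1 - p)) = C"
    proof -
      have "kant x = (2 * exp u * cosh u)^2 / (4 * (exp u * exp u))"
        unfolding kant_def x exp2_cosh by (simp add: exp2)
      also have "\<dots> = cosh u ^ 2" by (simp add: field_simps power2_eq_square)
      also have "\<dots> = cosh u powr 2" using powr_realpow[of "cosh u" 2] by simp
      finally have "kant x powr (p * (1 - p)) = (cosh u powr 2) powr (p * (1 - p))" by simp
      also have "\<dots> = cosh u powr (2 * (p * (1 - p)))" by (rule powr_powr)
      finally show ?thesis unfolding C_def q_def by (simp add: algebra_simps)
    qed
    have "wyd p x 1 = (exp u * (sinh u / u) / S) * (p * q * u * sinh u)"
      unfolding W using u0 Spos by (simp add: field_simps power2_eq_square)
    also have "\<dots> \<le> (exp u * (sinh u / u) / S) * (S * C)"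
    proof (rule mult_left_mono[OF main])
      have "0 < exp u * (sinh u / u)" using shu by (intro mult_pos_pos) auto
      thus "0 \<le> exp u * (sinh u / u) / S" using Spos by (intro less_imp_le divide_pos_pos)
    qed
    also have "\<dots> = C * (exp u * sinh u / u)" using Spos by (simp add: field_simps)
    finally show ?thesis unfolding K Lm .
  qed
qed

end
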